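(* Let $\mathbf{L}\in\{\mathbf{K}_D,\mathbf{KD}_D,\mathbf{KT}_D\}$ and let $\Gamma\Rightarrow\Delta$ be a sequent. If $\Gamma\Rightarrow\Delta$ is valid in every finite model of the class $\mathbb{M}_{\mathbf{L}}$ (where $\mathbb{M}_{\mathbf{K}_D}=\mathbb{M}$, $\mathbb{M}_{\mathbf{KD}_D}=\mathbb{M}_{\mathbf{ser}}$, $\mathbb{M}_{\mathbf{KT}_D}=\mathbb{M}_{\mathbf{ref}}$), then $\mathsf{G}(\mathbf{L})\vdash\Gamma\Rightarrow\Delta$.
   Context: Language: fix a finite nonempty set $\mathsf{Agt}$ of agents and a countable set $\mathsf{Prop}$ of propositional variables; $\mathsf{Grp}$ is the set of nonempty subsets of $\mathsf{Agt}$. Formulas: $\alpha::=p\mid\bot\mid\alpha\wedge\alpha\mid\alpha\vee\alpha\mid\alpha\rightarrow\alpha\mid\neg\alpha\mid D_G\alpha$ ($p\in\mathsf{Prop}$, $G\in\mathsf{Grp}$). Outmost-boxed formula: one of the form $D_G\gamma$. Semantics: a model $M=(W,(R_G)_{G\in\mathsf{Grp}},V)$ has a set $W$ of states, binary relations $R_G$ on $W$ with $R_H\subseteq R_G$ whenever $G\subseteq H$, and $V:\mathsf{Prop}\to\mathcal P(W)$; it is finite if $W$ is finite. Truth is classical for connectives and $M,w\models D_G\alpha$ iff $M,v\models\alpha$ for all $v$ with $(w,v)\in R_G$. $\mathbb{M}$: all models; $\mathbb{M}_{\mathbf{ser}}$: models with $R_{\{a\}}$ serial for every $a\in\mathsf{Agt}$;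 $\mathbb{M}_{\mathbf{ref}}$: models with every $R_G$ reflexive. A sequent $\Gamma\Rightarrow\Delta$ is valid in a class if $\bigwedge\Gamma\rightarrow\bigvee\Delta$ is true at every state of every model in it (empty conjunction $\top$, empty disjunction $\bot$). Sequent calculi (sequents $\Gamma\Rightarrow\Delta$ are pairs of finite multisets; derivable = root of a finite tree built from initial sequents by rules): $\mathsf{G}(\mathbf{K}_D)$ has initial sequents $\Gamma,p\Rightarrow p,\Delta$ and $\bot,\Gamma\Rightarrow\Delta$; rules $(R\wedge)$ from $\Gamma\Rightarrow\Delta,\alpha_1$ and $\Gamma\Rightarrow\Delta,\alpha_2$ infer $\Gamma\Rightarrow\Delta,\alpha_1\wedge\alpha_2$; $(L\wedge)$ from $\alpha_1,\alpha_2,\Gamma\Rightarrow\Delta$ infer $\alpha_1\wedge\alpha_2,\Gamma\Rightarrow\Delta$; $(R\vee)$ from $\Gamma\Rightarrow\Delta,\alpha_1,\alpha_2$ infer $\Gamma\Rightarrow\Delta,\alpha_1\vee\alpha_2$; $(L\vee)$ from $\alpha_1,\Gamma\Rightarrow\Delta$ and $\alpha_2,\Gamma\Rightarrow\Delta$ infer $\alpha_1\vee\alpha_2,\Gamma\Rightarrow\Delta$; $(R\rightarrow)$ from $\alpha_1,\Gamma\Rightarrow\Delta,\alpha_2$ infer $\Gamma\Rightarrow\Delta,\alpha_1\rightarrow\alpha_2$; $(L\rightarrow)$ from $\Gamma\Rightarrow\Delta,\alpha_1$ and $\alpha_2,\Gamma\Rightarrow\Delta$ infer $\alpha_1\rightarrow\alpha_2,\Gamma\Rightarrow\Delta$;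 $(R\neg)$ from $\alpha,\Gamma\Rightarrow\Delta$ infer $\Gamma\Rightarrow\Delta,\neg\alpha$; $(L\neg)$ from $\Gamma\Rightarrow\Delta,\alpha$ infer $\neg\alpha,\Gamma\Rightarrow\Delta$; $(D_K)$: from $\alpha_1,\dots,\alpha_n\Rightarrow\beta$ ($n\ge0$) infer $\Sigma,D_{G_1}\alpha_1,\dots,D_{G_n}\alpha_n\Rightarrow D_G\beta,\Omega$ where all $G_i\subseteq G$, $\Sigma$ consists only of propositional variables, $\bot$, and $D_H\gamma$ with $H\not\subseteq G$, and $\Omega$ only of propositional variables, $\bot$, outmost-boxed formulas. $\mathsf{G}(\mathbf{KD}_D)$ adds $(D_D)$: from $\Gamma\Rightarrow$ with $\Gamma\neq\emptyset$ infer $\Sigma,D_{\{a\}}\Gamma\Rightarrow\Omega$, $\Sigma$ only propositional variables, $\bot$, $D_H\gamma$ with $H\neq\{a\}$; $\Omega$ only propositional variables, $\bot$, outmost-boxed formulas. $\mathsf{G}(\mathbf{KT}_D)$ adds to $\mathsf{G}(\mathbf{K}_D)$ $(D_T)$: from $D_G\alpha,\alpha,\Gamma\Rightarrow\Delta$ infer $D_G\alpha,\Gamma\Rightarrow\Delta$. *)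

theory Defs
  imports Main "HOL-Library.Multiset" "HOL-Library.Countable"
begin

text \<open>Agents: a finite (nonempty) type 'a.  Propositional variables: a countable type 'p.
  Groups are nonempty sets of agents; box indices are restricted to groups by wf_fm.\<close>

datatype ('a, 'p) fm =
    Atom 'p
  | Bot
  | Conj "('a, 'p) fm" "('a, 'p) fm"
  | Disj "('a, 'p) fm" "('a, 'p) fm"
  | Imp "('a, 'p) fm" "('a, 'p) fm"
  | Neg "('a, 'p) fm"
  | Box "'a set" "('a, 'p) fm"

fun wf_fm :: "('a, 'p) fm \<Rightarrow> bool" where
  "wf_fm (Atom p) = True"
| "wf_fm Bot = True"
| "wf_fm (Conj a b) = (wf_fm a \<and> wf_fm b)"
| "wf_fm (Disj a b) = (wf_fm a \<and> wf_fm b)"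
| "wf_fm (Imp a b) = (wf_fm a \<and> wf_fm b)"
| "wf_fm (Neg a) = wf_fm a"
| "wf_fm (Box G a) = (G \<noteq> {} \<and> wf_fm a)"

fun is_atom :: "('a, 'p) fm \<Rightarrow> bool" where
  "is_atom (Atom p) = True"
| "is_atom _ = False"

fun is_boxed :: "('a, 'p) fm \<Rightarrow> bool" where
  "is_boxed (Box G a) = True"
| "is_boxed _ = False"

record ('w, 'a, 'p) model =
  W :: "'w set"
  R :: "'a set \<Rightarrow> ('w \<times> 'w) set"
  V :: "'p \<Rightarrow> 'w set"

definition is_model :: "('w, 'a, 'p) model \<Rightarrow> bool" where
  "is_model M \<longleftrightarrow>
     (\<forall>G. G \<noteq> {} \<longrightarrow> R M G \<subseteq> W M \<times> W M) \<and>
     (\<forall>p. V M p \<subseteq> W M) \<and>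
     (\<forall>G H. G \<noteq> {} \<longrightarrow> G \<subseteq> H \<longrightarrow> R M H \<subseteq> R M G)"

definition serial_model :: "('w, 'a, 'p) model \<Rightarrow> bool" where
  "serial_model M \<longleftrightarrow> is_model M \<and>
     (\<forall>a. \<forall>w\<in>W M. \<exists>v. (w, v) \<in> R M {a})"

definition refl_model :: "('w, 'a, 'p) model \<Rightarrow> bool" where
  "refl_model M \<longleftrightarrow> is_model M \<and>
     (\<forall>G. G \<noteq> {} \<longrightarrow> (\<forall>w\<in>W M. (w, w) \<in> R M G))"

fun sat :: "('w, 'a, 'p) model \<Rightarrow> 'w \<Rightarrow> ('a, 'p) fm \<Rightarrow> bool" where
  "sat M w (Atom p) = (w \<in> V M p)"
| "sat M w Bot = False"
| "sat M w (Conj a b) = (sat M w a \<and> sat M w b)"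
| "sat M w (Disj a b) = (sat M w a \<or> sat M w b)"
| "sat M w (Imp a b) = (sat M w a \<longrightarrow> sat M w b)"
| "sat M w (Neg a) = (\<not> sat M w a)"
| "sat M w (Box G a) = (\<forall>v. (w, v) \<in> R M G \<longrightarrow> sat M v a)"

definition valid_seq_in ::
  "('w, 'a, 'p) model \<Rightarrow> ('a, 'p) fm multiset \<Rightarrow> ('a, 'p) fm multiset \<Rightarrow> bool" where
  "valid_seq_in M \<Gamma> \<Delta> \<longleftrightarrow>
     (\<forall>w\<in>W M. (\<forall>\<phi>\<in>#\<Gamma>. sat M w \<phi>) \<longrightarrow> (\<exists>\<psi>\<in>#\<Delta>. sat M w \<psi>))"

datatype logic = K_D | KD_D | KT_D

fun model_class :: "logic \<Rightarrow> ('w, 'a, 'p) model \<Rightarrow> bool" where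
  "model_class K_D M = is_model M"
| "model_class KD_D M = serial_model M"
| "model_class KT_D M = refl_model M"

text \<open>Validity in every finite model of the class (states drawn from nat;
  every finite model is isomorphic to one of these).\<close>
definition valid_fin :: "logic \<Rightarrow> ('a, 'p) fm multiset \<Rightarrow> ('a, 'p) fm multiset \<Rightarrow> bool" where
  "valid_fin L \<Gamma> \<Delta> \<longleftrightarrow>
     (\<forall>M :: (nat, 'a, 'p) model. finite (W M) \<longrightarrow> model_class L M \<longrightarrow> valid_seq_in M \<Gamma> \<Delta>)"

inductive derivable :: "logic \<Rightarrow> ('a, 'p) fm multiset \<Rightarrow> ('a, 'p) fm multiset \<Rightarrow> bool"
  for L :: logic where
  init: "derivable L (add_mset (Atom p) \<Gamma>) (add_mset (Atom p) \<Delta>)"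
| botL: "derivable L (add_mset Bot \<Gamma>) \<Delta>"
| conjR: "derivable L \<Gamma> (add_mset a1 \<Delta>) \<Longrightarrow> derivable L \<Gamma> (add_mset a2 \<Delta>)
          \<Longrightarrow> derivable L \<Gamma> (add_mset (Conj a1 a2) \<Delta>)"
| conjL: "derivable L (add_mset a1 (add_mset a2 \<Gamma>)) \<Delta>
          \<Longrightarrow> derivable L (add_mset (Conj a1 a2) \<Gamma>) \<Delta>"
| disjR: "derivable L \<Gamma> (add_mset a1 (add_mset a2 \<Delta>))
          \<Longrightarrow> derivable L \<Gamma> (add_mset (Disj a1 a2) \<Delta>)"
| disjL: "derivable L (add_mset a1 \<Gamma>) \<Delta> \<Longrightarrow> derivable L (add_mset a2 \<Gamma>) \<Delta>
          \<Longrightarrow> derivable L (add_mset (Disj a1 a2) \<Gamma>) \<Delta>"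
| impR: "derivable L (add_mset a1 \<Gamma>) (add_mset a2 \<Delta>)
          \<Longrightarrow> derivable L \<Gamma> (add_mset (Imp a1 a2) \<Delta>)"
| impL: "derivable L \<Gamma> (add_mset a1 \<Delta>) \<Longrightarrow> derivable L (add_mset a2 \<Gamma>) \<Delta>
          \<Longrightarrow> derivable L (add_mset (Imp a1 a2) \<Gamma>) \<Delta>"
| negR: "derivable L (add_mset a \<Gamma>) \<Delta> \<Longrightarrow> derivable L \<Gamma> (add_mset (Neg a) \<Delta>)"
| negL: "derivable L \<Gamma> (add_mset a \<Delta>) \<Longrightarrow> derivable L (add_mset (Neg a) \<Gamma>) \<Delta>"
| DK: "derivable L (image_mset snd \<Phi>) {#\<beta>#}
       \<Longrightarrow> (\<forall>x\<in>#\<Phi>. fst x \<subseteq> G)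
       \<Longrightarrow> (\<forall>\<phi>\<in>#\<Sigma>. is_atom \<phi> \<or> \<phi> = Bot \<or> (\<exists>H \<gamma>. \<phi> = Box H \<gamma> \<and> \<not> H \<subseteq> G))
       \<Longrightarrow> (\<forall>\<phi>\<in>#\<Omega>. is_atom \<phi> \<or> \<phi> = Bot \<or> is_boxed \<phi>)
       \<Longrightarrow> derivable L (\<Sigma> + image_mset (\<lambda>(H, \<alpha>). Box H \<alpha>) \<Phi>) (add_mset (Box G \<beta>) \<Omega>)"
| DD: "L = KD_D \<Longrightarrow> derivable L \<Gamma> {#} \<Longrightarrow> \<Gamma> \<noteq> {#}
       \<Longrightarrow> (\<forall>\<phi>\<in>#\<Sigma>. is_atom \<phi> \<or> \<phi> = Bot \<or> (\<exists>H \<gamma>. \<phi> = Box H \<gamma> \<and> H \<noteq> {a}))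
       \<Longrightarrow> (\<forall>\<phi>\<in>#\<Omega>. is_atom \<phi> \<or> \<phi> = Bot \<or> is_boxed \<phi>)
       \<Longrightarrow> derivable L (\<Sigma> + image_mset (Box {a}) \<Gamma>) \<Omega>"
| DT: "L = KT_D \<Longrightarrow> derivable L (add_mset (Box G \<alpha>) (add_mset \<alpha> \<Gamma>)) \<Delta>
       \<Longrightarrow> derivable L (add_mset (Box G \<alpha>) \<Gamma>) \<Delta>"

end

theory Submission
  imports Defs
begin

fun grp :: "('a, 'p) fm \<Rightarrow> 'a set" where
  "grp (Box G a) = G"
| "grp _ = {}"

fun body :: "('a, 'p) fm \<Rightarrow> ('a, 'p) fm" where
  "body (Box G a) = a"
| "body _ = Bot"

definition RW :: "('w, 'a, 'p) model \<Rightarrow> bool" where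
  "RW M \<longleftrightarrow> (\<forall>G. R M G \<subseteq> W M \<times> W M)"

definition cmodel :: "logic \<Rightarrow> ('w, 'a, 'p) model \<Rightarrow> bool" where
  "cmodel L M \<longleftrightarrow> finite (W M) \<and> model_class L M \<and> RW M"

lemma mc_is_model: "model_class L M \<Longrightarrow> is_model M"
  by (cases L) (auto simp: serial_model_def refl_model_def)

definition comb :: "('p \<Rightarrow> bool) \<Rightarrow> bool \<Rightarrow> 't set \<Rightarrow> ('t \<Rightarrow> ('t list, 'a, 'p) model)
   \<Rightarrow> ('t \<Rightarrow> 't list) \<Rightarrow> ('t \<Rightarrow> 'a set \<Rightarrow> bool) \<Rightarrow> ('t list, 'a, 'p) model" where
  "comb V0 lp T M r lab = \<lparr> W = insert [] {t # s | t s. t \<in> T \<and> s \<in> W (M t)},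
     R = (\<lambda>G. (if lp then {([], [])} else {}) \<union> {([], t # r t) | t. t \<in> T \<and> lab t G}
              \<union> {(t # s, t # s') | t s s'. t \<in> T \<and> (s, s') \<in> R (M t) G}),
     V = (\<lambda>p. (if V0 p then {[]} else {}) \<union> {t # s | t s. t \<in> T \<and> s \<in> V (M t) p}) \<rparr>"

lemma comb_child:
  assumes "t \<in> T" "s \<in> W (M t)" "RW (M t)"
  shows "sat (comb V0 lp T M r lab) (t # s) \<phi> = sat (M t) s \<phi>"
  using assms(2)
proof (induction \<phi> arbitrary: s)
  case (Box G a)
  have "(t # s, v) \<in> R (comb V0 lp T M r lab) G \<longleftrightarrow> (\<exists>s'. v = t # s' \<and> (s, s') \<in> R (M t) G)" for v
    using assms(1) by (auto simp: comb_def)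
  moreover have "(s, s') \<in> R (M t) G \<Longrightarrow> s' \<in> W (M t)" for s'
    using assms(3) by (auto simp: RW_def)
  ultimately show ?case using Box by auto
qed (use assms in \<open>auto simp: comb_def\<close>)

lemma comb_root_box:
  assumes "\<forall>t\<in>T. r t \<in> W (M t) \<and> RW (M t)"
  shows "sat (comb V0 lp T M r lab) [] (Box G a) \<longleftrightarrow>
     ((lp \<longrightarrow> sat (comb V0 lp T M r lab) [] a) \<and> (\<forall>t\<in>T. lab t G \<longrightarrow> sat (M t) (r t) a))"
proof -
  have "([], v) \<in> R (comb V0 lp T M r lab) G \<longleftrightarrow> ((lp \<and> v = []) \<or> (\<exists>t\<in>T. lab t G \<and> v = t # r t))" for v
    by (auto simp: comb_def)
  then show ?thesis using assms comb_child[of _ T "r _" M] by auto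
qed

lemma comb_root_atom: "sat (comb V0 lp T M r lab) [] (Atom p) \<longleftrightarrow> V0 p"
  by (auto simp: comb_def)

lemma comb_W: "W (comb V0 lp T M r lab) = insert [] (\<Union>t\<in>T. (Cons t) ` W (M t))"
  by (auto simp: comb_def)

lemma comb_model:
  assumes "finite T" "\<forall>t\<in>T. cmodel L (M t) \<and> r t \<in> W (M t)"
    "\<forall>t G H. G \<noteq> {} \<longrightarrow> G \<subseteq> H \<longrightarrow> lab t H \<longrightarrow> lab t G"
    "L = KD_D \<Longrightarrow> \<forall>a. \<exists>t\<in>T. lab t {a}" "L = KT_D \<Longrightarrow> lp"
  shows "cmodel L (comb V0 lp T M r lab)"
proof -
  let ?N = "comb V0 lp T M r lab"
  have im: "\<forall>t\<in>T. is_model (M t)" using assms(2) mc_is_model by (auto simp: cmodel_def)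
  have fin: "finite (W ?N)" using assms(1,2) by (auto simp: comb_W cmodel_def)
  have rw: "RW ?N" unfolding RW_def
  proof
    fix G show "R ?N G \<subseteq> W ?N \<times> W ?N"
    proof
      fix x assume "x \<in> R ?N G"
      have rwc: "\<And>t G s s'. t \<in> T \<Longrightarrow> (s,s') \<in> R (M t) G \<Longrightarrow> s \<in> W (M t) \<and> s' \<in> W (M t)"
        using assms(2) unfolding cmodel_def RW_def by blast
      from \<open>x \<in> R ?N G\<close> show "x \<in> W ?N \<times> W ?N"
        using assms(2) rwc unfolding comb_def by (auto split: if_splits)
    qed
  qed
  have ism: "is_model ?N"
  proof -
    have "V ?N p \<subseteq> W ?N" for p
    proof
      fix x assume "x \<in> V ?N p"
      then consider "x = []" | t s where "t \<in> T" "s \<in> V (M t) p" "x = t # s"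
        unfolding comb_def by (auto split: if_splits)
      then show "x \<in> W ?N"
      proof cases
        case 2
        then have "s \<in> W (M t)" using im unfolding is_model_def by blast
        then show ?thesis using 2 by (auto simp: comb_def)
      qed (auto simp: comb_def)
    qed
    moreover have "R ?N H \<subseteq> R ?N G" if "G \<noteq> {}" "G \<subseteq> H" for G H
    proof
      fix x assume "x \<in> R ?N H"
      then consider "lp" "x = ([],[])" | t where "t \<in> T" "lab t H" "x = ([], t # r t)"
        | t s s' where "t \<in> T" "(s,s') \<in> R (M t) H" "x = (t # s, t # s')"
        unfolding comb_def by (auto split: if_splits)
      then show "x \<in> R ?N G"
      proof cases
        case 1 then show ?thesis by (auto simp: comb_def)
      next
        case 2
        then have "lab t G" using assms(3) that by blast
        then show ?thesis using 2 by (auto simp: comb_def)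
      next
        case 3
        then have "(s,s') \<in> R (M t) G" using im that unfolding is_model_def by blast
        then show ?thesis using 3 by (auto simp: comb_def)
      qed
    qed
    ultimately show ?thesis using rw unfolding is_model_def RW_def by blast
  qed
  show ?thesis
  proof (cases L)
    case K_D then show ?thesis using fin rw ism by (simp add: cmodel_def)
  next
    case KD_D
    have "\<exists>v. (w, v) \<in> R ?N {a}" if wW: "w \<in> W ?N" for a w
    proof (cases "w = []")
      case True
      then obtain t where "t \<in> T" "lab t {a}" using assms(4) KD_D by blast
      then show ?thesis using True by (auto simp: comb_def)
    next
      case False
      then obtain t s where ts: "t \<in> T" "s \<in> W (M t)" "w = t # s" using wW by (auto simp: comb_def)
      then have "serial_model (M t)" using assms(2) KD_D by (auto simp: cmodel_def)
      then obtain s' where "(s, s') \<in> R (M t) {a}" using ts by (auto simp: serial_model_def)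
      then show ?thesis using ts by (auto simp: comb_def)
    qed
    then show ?thesis using fin rw ism KD_D by (simp add: cmodel_def serial_model_def)
  next
    case KT_D
    have "(w, w) \<in> R ?N G" if wW: "w \<in> W ?N" and Gne: "G \<noteq> {}" for G w
    proof (cases "w = []")
      case True
      then show ?thesis using assms(5) KT_D by (auto simp: comb_def)
    next
      case False
      then obtain t s where ts: "t \<in> T" "s \<in> W (M t)" "w = t # s" using wW by (auto simp: comb_def)
      then have "refl_model (M t)" using assms(2) KT_D by (auto simp: cmodel_def)
      then have "(s, s) \<in> R (M t) G" using ts Gne by (auto simp: refl_model_def)
      then show ?thesis using ts by (auto simp: comb_def)
    qed
    then show ?thesis using fin rw ism KT_D by (simp add: cmodel_def refl_model_def)
  qed
qed

definition tmod :: "('w \<Rightarrow> nat) \<Rightarrow> ('w, 'a, 'p) model \<Rightarrow> (nat, 'a, 'p) model" where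
  "tmod f M = \<lparr> W = f ` W M, R = (\<lambda>G. (\<lambda>(x, y). (f x, f y)) ` R M G), V = (\<lambda>p. f ` V M p) \<rparr>"

lemma tmod_sat:
  assumes "inj_on f (W M)" "RW M" "is_model M" "x \<in> W M"
  shows "sat (tmod f M) (f x) \<phi> = sat M x \<phi>"
  using assms(4)
proof (induction \<phi> arbitrary: x)
  case (Atom p)
  have "V M p \<subseteq> W M" using assms(3) by (auto simp: is_model_def)
  then show ?case using Atom assms(1) by (auto simp: tmod_def inj_on_def)
next
  case (Box G a)
  have "(f x, v) \<in> R (tmod f M) G \<longleftrightarrow> (\<exists>y. v = f y \<and> (x, y) \<in> R M G)" for v
  proof
    assume "(f x, v) \<in> R (tmod f M) G"
    then obtain x' y where "(x', y) \<in> R M G" "f x = f x'" "v = f y" by (auto simp: tmod_def)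
    moreover have "x' \<in> W M" using assms(2) \<open>(x', y) \<in> R M G\<close> by (auto simp: RW_def)
    ultimately show "\<exists>y. v = f y \<and> (x, y) \<in> R M G" using assms(1) Box.prems
      by (metis inj_on_def)
  qed (auto simp: tmod_def)
  moreover have "(x, y) \<in> R M G \<Longrightarrow> y \<in> W M" for y using assms(2) by (auto simp: RW_def)
  ultimately show ?case using Box by auto
qed auto

lemma to_nat_model:
  fixes M :: "('w, 'a, 'p) model"
  assumes "cmodel L M" "w \<in> W M"
  shows "\<exists>M' :: (nat, 'a, 'p) model. finite (W M') \<and> model_class L M' \<and>
            (\<exists>w' \<in> W M'. \<forall>\<phi>. sat M' w' \<phi> = sat M w \<phi>)"
proof -
  have fin: "finite (W M)" and mc: "model_class L M" and rw: "RW M" using assms(1) by (auto simp: cmodel_def)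
  have im: "is_model M" using mc mc_is_model by blast
  obtain f :: "'w \<Rightarrow> nat" and n where f: "f ` W M = {i. i < n}" "inj_on f (W M)"
    using finite_imp_inj_to_nat_seg[OF fin] by blast
  let ?M = "tmod f M"
  have ism: "is_model ?M"
  proof -
    have a: "R ?M G \<subseteq> W ?M \<times> W ?M" for G
    proof
      fix z assume "z \<in> R ?M G"
      then obtain x y where "(x,y) \<in> R M G" "z = (f x, f y)" by (auto simp: tmod_def)
      moreover have "x \<in> W M" "y \<in> W M" using rw calculation(1) by (auto simp: RW_def)
      ultimately show "z \<in> W ?M \<times> W ?M" by (auto simp: tmod_def)
    qed
    have b: "V ?M p \<subseteq> W ?M" for p
    proof -
      have "V M p \<subseteq> W M" using im by (simp add: is_model_def)
      then show ?thesis by (auto simp: tmod_def)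
    qed
    have c: "R ?M H \<subseteq> R ?M G" if "G \<noteq> {}" "G \<subseteq> H" for G H
    proof -
      have "R M H \<subseteq> R M G" using im that by (auto simp: is_model_def)
      then show ?thesis by (auto simp: tmod_def)
    qed
    show ?thesis using a b c unfolding is_model_def by blast
  qed
  have "model_class L ?M"
  proof (cases L)
    case K_D then show ?thesis using ism by simp
  next
    case KD_D
    have "\<exists>v. (u, v) \<in> R ?M {a}" if uW: "u \<in> W ?M" for a u
    proof -
      obtain x where x: "x \<in> W M" "u = f x" using uW by (auto simp: tmod_def)
      then obtain y where "(x, y) \<in> R M {a}" using mc KD_D by (auto simp: serial_model_def)
      then show ?thesis using x by (auto simp: tmod_def)
    qed
    then show ?thesis using KD_D ism by (simp add: serial_model_def)
  next
    case KT_D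
    have "(u, u) \<in> R ?M G" if uW: "u \<in> W ?M" and Gne: "G \<noteq> {}" for G u
    proof -
      obtain x where x: "x \<in> W M" "u = f x" using uW by (auto simp: tmod_def)
      then have "(x, x) \<in> R M G" using mc KT_D Gne by (auto simp: refl_model_def)
      then show ?thesis using x by (auto simp: tmod_def)
    qed
    then show ?thesis using KT_D ism by (simp add: refl_model_def)
  qed
  moreover have "finite (W ?M)" using fin by (simp add: tmod_def)
  moreover have "f w \<in> W ?M" using assms(2) by (simp add: tmod_def)
  ultimately show ?thesis using tmod_sat[OF f(2) rw im assms(2)] by blast
qed

fun sub :: "('a, 'p) fm \<Rightarrow> ('a, 'p) fm set" where
  "sub (Atom p) = {Atom p}"
| "sub Bot = {Bot}"
| "sub (Conj a b) = insert (Conj a b) (sub a \<union> sub b)"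
| "sub (Disj a b) = insert (Disj a b) (sub a \<union> sub b)"
| "sub (Imp a b) = insert (Imp a b) (sub a \<union> sub b)"
| "sub (Neg a) = insert (Neg a) (sub a)"
| "sub (Box G a) = insert (Box G a) (sub a)"

fun mdep :: "('a, 'p) fm \<Rightarrow> nat" where
  "mdep (Atom p) = 0"
| "mdep Bot = 0"
| "mdep (Conj a b) = max (mdep a) (mdep b)"
| "mdep (Disj a b) = max (mdep a) (mdep b)"
| "mdep (Imp a b) = max (mdep a) (mdep b)"
| "mdep (Neg a) = mdep a"
| "mdep (Box G a) = Suc (mdep a)"

fun fsize :: "('a, 'p) fm \<Rightarrow> nat" where
  "fsize (Atom p) = 1"
| "fsize Bot = 1"
| "fsize (Conj a b) = Suc (fsize a + fsize b)"
| "fsize (Disj a b) = Suc (fsize a + fsize b)"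
| "fsize (Imp a b) = Suc (fsize a + fsize b)"
| "fsize (Neg a) = Suc (fsize a)"
| "fsize (Box G a) = Suc (fsize a)"

lemma sub_refl: "\<phi> \<in> sub \<phi>" by (cases \<phi>) auto
lemma sub_trans: "\<psi> \<in> sub \<phi> \<Longrightarrow> sub \<psi> \<subseteq> sub \<phi>" by (induction \<phi>) (auto simp: sub_refl)
lemma finite_sub: "finite (sub \<phi>)" by (induction \<phi>) auto
lemma mdep_sub: "\<psi> \<in> sub \<phi> \<Longrightarrow> mdep \<psi> \<le> mdep \<phi>" by (induction \<phi>) auto

definition subs :: "('a, 'p) fm set \<Rightarrow> ('a, 'p) fm set" where
  "subs S = \<Union> (sub ` S)"

definition boxsubs :: "('a, 'p) fm set \<Rightarrow> ('a, 'p) fm set" where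
  "boxsubs S = {\<phi> \<in> subs S. is_boxed \<phi>}"

type_synonym ('a, 'p) tri = "('a, 'p) fm multiset \<times> ('a, 'p) fm multiset \<times> ('a, 'p) fm set"

definition f1 :: "('a, 'p) tri \<Rightarrow> nat" where
  "f1 x = Max (insert 0 (mdep ` set_mset (fst x + fst (snd x))))"
definition f2 :: "('a, 'p) tri \<Rightarrow> nat" where
  "f2 x = card (boxsubs (set_mset (fst x + fst (snd x))) - snd (snd x))"
definition f3 :: "('a, 'p) tri \<Rightarrow> nat" where
  "f3 x = sum_mset (image_mset fsize (fst x + fst (snd x)))"

definition ms :: "(('a, 'p) tri \<times> ('a, 'p) tri) set" where
  "ms = measures [f1, f2, f3]"

lemma wf_ms: "wf ms" by (simp add: ms_def)

lemma subs_mono: "S' \<subseteq> subs S \<Longrightarrow> subs S' \<subseteq> subs S"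
proof
  fix x assume a: "S' \<subseteq> subs S" and "x \<in> subs S'"
  then obtain \<phi>' where "\<phi>' \<in> S'" "x \<in> sub \<phi>'" unfolding subs_def by blast
  moreover obtain \<phi> where "\<phi> \<in> S" "\<phi>' \<in> sub \<phi>" using a calculation(1) unfolding subs_def by blast
  ultimately show "x \<in> subs S" using sub_trans unfolding subs_def by blast
qed

lemma subs_self: "S \<subseteq> subs S" unfolding subs_def using sub_refl by blast

lemma finite_boxsubs: "finite S \<Longrightarrow> finite (boxsubs S)"
proof -
  assume "finite S"
  then have "finite (subs S)" using finite_sub by (auto simp: subs_def)
  moreover have "boxsubs S \<subseteq> subs S" by (auto simp: boxsubs_def)
  ultimately show ?thesis using finite_subset by blast
qed

lemma f1_le:
  assumes "set_mset (\<Gamma>' + \<Delta>') \<subseteq> subs (set_mset (\<Gamma> + \<Delta>))"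
  shows "f1 (\<Gamma>', \<Delta>', B') \<le> f1 (\<Gamma>, \<Delta>, B)"
  unfolding f1_def fst_conv snd_conv
proof (rule Max.boundedI)
  fix y assume "y \<in> insert 0 (mdep ` set_mset (\<Gamma>' + \<Delta>'))"
  then consider "y = 0" | \<phi>' where "\<phi>' \<in># \<Gamma>' + \<Delta>'" "y = mdep \<phi>'" by auto
  then show "y \<le> Max (insert 0 (mdep ` set_mset (\<Gamma> + \<Delta>)))"
  proof cases
    case 2
    then obtain \<phi> where "\<phi> \<in># \<Gamma> + \<Delta>" "\<phi>' \<in> sub \<phi>" using assms unfolding subs_def by blast
    then have "y \<le> mdep \<phi>" using 2 mdep_sub by auto
    also have "mdep \<phi> \<le> Max (insert 0 (mdep ` set_mset (\<Gamma> + \<Delta>)))"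
      using \<open>\<phi> \<in># \<Gamma> + \<Delta>\<close> by (intro Max_ge) auto
    finally show ?thesis .
  qed simp
qed auto

lemma f2_le:
  assumes "set_mset (\<Gamma>' + \<Delta>') \<subseteq> subs (set_mset (\<Gamma> + \<Delta>))"
  shows "f2 (\<Gamma>', \<Delta>', B) \<le> f2 (\<Gamma>, \<Delta>, B)"
  unfolding f2_def fst_conv snd_conv
proof (rule card_mono)
  show "finite (boxsubs (set_mset (\<Gamma> + \<Delta>)) - B)"
    by (rule finite_Diff, rule finite_boxsubs, rule finite_set_mset)
  show "boxsubs (set_mset (\<Gamma>' + \<Delta>')) - B \<subseteq> boxsubs (set_mset (\<Gamma> + \<Delta>)) - B"
    using subs_mono[OF assms] unfolding boxsubs_def by auto
qed

lemma step_ms: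
  assumes "set_mset (\<Gamma>' + \<Delta>') \<subseteq> subs (set_mset (\<Gamma> + \<Delta>))"
    and "sum_mset (image_mset fsize (\<Gamma>' + \<Delta>')) < sum_mset (image_mset fsize (\<Gamma> + \<Delta>))"
  shows "((\<Gamma>', \<Delta>', B), (\<Gamma>, \<Delta>, B)) \<in> ms"
  using f1_le[OF assms(1), of B B] f2_le[OF assms(1), of B] assms(2)
  unfolding ms_def f3_def by auto

lemma in_subs: "\<phi> \<in> S \<Longrightarrow> \<psi> \<in> sub \<phi> \<Longrightarrow> \<psi> \<in> subs S"
  unfolding subs_def by blast

lemma subs_mono2: "S \<subseteq> S' \<Longrightarrow> subs S \<subseteq> subs S'"
  unfolding subs_def by blast

lemma dt_ms:
  assumes "Box G a \<in># \<Gamma>" "Box G a \<notin> B"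
  shows "((add_mset a \<Gamma>, \<Delta>, insert (Box G a) B), (\<Gamma>, \<Delta>, B)) \<in> ms"
proof -
  have bs: "Box G a \<in> subs (set_mset (\<Gamma> + \<Delta>))"
    by (rule in_subs[of "Box G a"]) (use assms(1) sub_refl in auto)
  have s: "set_mset (add_mset a \<Gamma> + \<Delta>) \<subseteq> subs (set_mset (\<Gamma> + \<Delta>))"
  proof
    fix x assume "x \<in># add_mset a \<Gamma> + \<Delta>"
    then consider "x = a" | "x \<in># \<Gamma> + \<Delta>" by auto
    then show "x \<in> subs (set_mset (\<Gamma> + \<Delta>))"
    proof cases
      case 1
      have "a \<in> sub (Box G a)" using sub_refl[of a] by simp
      then show ?thesis using 1 assms(1) by (intro in_subs[of "Box G a"]) auto
    next
      case 2 then show ?thesis by (intro in_subs[of x]) (auto simp: sub_refl)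
    qed
  qed
  have e: "subs (set_mset (add_mset a \<Gamma> + \<Delta>)) = subs (set_mset (\<Gamma> + \<Delta>))"
  proof
    show "subs (set_mset (add_mset a \<Gamma> + \<Delta>)) \<subseteq> subs (set_mset (\<Gamma> + \<Delta>))" by (rule subs_mono[OF s])
    show "subs (set_mset (\<Gamma> + \<Delta>)) \<subseteq> subs (set_mset (add_mset a \<Gamma> + \<Delta>))" by (rule subs_mono2) auto
  qed
  have fin: "finite (boxsubs (set_mset (\<Gamma> + \<Delta>)) - B)"
    by (rule finite_Diff, rule finite_boxsubs, rule finite_set_mset)
  have e2: "boxsubs (set_mset (add_mset a \<Gamma> + \<Delta>)) = boxsubs (set_mset (\<Gamma> + \<Delta>))"
    unfolding boxsubs_def e ..
  have bs2: "Box G a \<in> boxsubs (set_mset (\<Gamma> + \<Delta>))" using bs unfolding boxsubs_def by simp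
  have "boxsubs (set_mset (add_mset a \<Gamma> + \<Delta>)) - insert (Box G a) B
        \<subset> boxsubs (set_mset (\<Gamma> + \<Delta>)) - B"
    unfolding e2 using bs2 assms(2) by blast
  then have "f2 (add_mset a \<Gamma>, \<Delta>, insert (Box G a) B) < f2 (\<Gamma>, \<Delta>, B)"
    unfolding f2_def fst_conv snd_conv using psubset_card_mono[OF fin] by blast
  then show ?thesis using f1_le[OF s, of "insert (Box G a) B" B] unfolding ms_def in_measures by linarith
qed

lemma dk_ms:
  assumes "\<forall>\<phi>'\<in>#\<Gamma>' + \<Delta>'. \<exists>\<phi>\<in>#\<Gamma> + \<Delta>. mdep \<phi>' < mdep \<phi>" "\<Gamma>' + \<Delta>' \<noteq> {#}"
  shows "((\<Gamma>', \<Delta>', B'), (\<Gamma>, \<Delta>, B)) \<in> ms"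
proof -
  obtain \<psi> where "\<psi> \<in># \<Gamma>' + \<Delta>'" using assms(2) by (meson multiset_nonemptyE)
  then obtain \<phi> where \<phi>: "\<phi> \<in># \<Gamma> + \<Delta>" "mdep \<psi> < mdep \<phi>" using assms(1) by blast
  have le: "mdep \<phi> \<le> Max (insert 0 (mdep ` set_mset (\<Gamma> + \<Delta>)))" using \<phi>(1) by (intro Max_ge) auto
  have "f1 (\<Gamma>', \<Delta>', B') < f1 (\<Gamma>, \<Delta>, B)"
    unfolding f1_def fst_conv snd_conv
  proof (subst Max_less_iff, simp, simp, intro ballI)
    fix y assume "y \<in> insert 0 (mdep ` set_mset (\<Gamma>' + \<Delta>'))"
    then consider "y = 0" | \<phi>' where "\<phi>' \<in># \<Gamma>' + \<Delta>'" "y = mdep \<phi>'" by auto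
    then show "y < Max (insert 0 (mdep ` set_mset (\<Gamma> + \<Delta>)))"
    proof cases
      case 1 then show ?thesis using \<phi>(2) le by linarith
    next
      case 2
      then obtain \<chi> where "\<chi> \<in># \<Gamma> + \<Delta>" "y < mdep \<chi>" using assms(1) by blast
      moreover have "mdep \<chi> \<le> Max (insert 0 (mdep ` set_mset (\<Gamma> + \<Delta>)))"
        using calculation(1) by (intro Max_ge) auto
      ultimately show ?thesis by linarith
    qed
  qed
  then show ?thesis unfolding ms_def in_measures by blast
qed

fun hintL :: "('a, 'p) fm \<Rightarrow> ('a, 'p) fm set \<Rightarrow> ('a, 'p) fm set \<Rightarrow> bool" where
  "hintL (Conj a b) X Y = (a \<in> X \<and> b \<in> X)"
| "hintL (Disj a b) X Y = (a \<in> X \<or> b \<in> X)"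
| "hintL (Imp a b) X Y = (a \<in> Y \<or> b \<in> X)"
| "hintL (Neg a) X Y = (a \<in> Y)"
| "hintL _ X Y = False"

fun hintR :: "('a, 'p) fm \<Rightarrow> ('a, 'p) fm set \<Rightarrow> ('a, 'p) fm set \<Rightarrow> bool" where
  "hintR (Conj a b) X Y = (a \<in> Y \<or> b \<in> Y)"
| "hintR (Disj a b) X Y = (a \<in> Y \<and> b \<in> Y)"
| "hintR (Imp a b) X Y = (a \<in> X \<and> b \<in> Y)"
| "hintR (Neg a) X Y = (a \<in> X)"
| "hintR _ X Y = False"

lemma hintL_mono: "hintL \<phi> X Y \<Longrightarrow> X \<subseteq> X' \<Longrightarrow> Y \<subseteq> Y' \<Longrightarrow> hintL \<phi> X' Y'"
  by (cases \<phi>) auto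
lemma hintR_mono: "hintR \<phi> X Y \<Longrightarrow> X \<subseteq> X' \<Longrightarrow> Y \<subseteq> Y' \<Longrightarrow> hintR \<phi> X' Y'"
  by (cases \<phi>) auto

definition invt :: "('a, 'p) fm multiset \<Rightarrow> ('a, 'p) fm multiset \<Rightarrow> ('a, 'p) fm set
    \<Rightarrow> ('a, 'p) fm set \<Rightarrow> ('a, 'p) fm set \<Rightarrow> bool" where
  "invt \<Gamma> \<Delta> B X Y \<longleftrightarrow> set_mset \<Gamma> \<subseteq> X \<and> set_mset \<Delta> \<subseteq> Y \<and>
     (\<forall>\<phi>\<in>X. \<phi> \<in># \<Gamma> \<or> hintL \<phi> X Y) \<and> (\<forall>\<phi>\<in>Y. \<phi> \<in># \<Delta> \<or> hintR \<phi> X Y) \<and>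
     (\<forall>\<phi>\<in>B. is_boxed \<phi> \<and> \<phi> \<in># \<Gamma> \<and> body \<phi> \<in> X)"

definition cm :: "logic \<Rightarrow> ('a, 'p) fm set \<Rightarrow> ('a, 'p) fm set \<Rightarrow> bool" where
  "cm L X Y \<longleftrightarrow> (\<exists>M :: ((('a, 'p) fm + 'a) list, 'a, 'p) model. cmodel L M \<and>
      (\<exists>w\<in>W M. (\<forall>\<phi>\<in>X. sat M w \<phi>) \<and> (\<forall>\<psi>\<in>Y. \<not> sat M w \<psi>)))"

lemma cm_mono: "cm L X' Y' \<Longrightarrow> X \<subseteq> X' \<Longrightarrow> Y \<subseteq> Y' \<Longrightarrow> cm L X Y"
  unfolding cm_def by blast

definition IHP :: "logic \<Rightarrow> ('a, 'p) fm multiset \<Rightarrow> ('a, 'p) fm multiset \<Rightarrow> ('a, 'p) fm set \<Rightarrow> bool" where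
  "IHP L \<Gamma> \<Delta> B \<longleftrightarrow> (\<forall>\<Gamma>' \<Delta>' B' X' Y'. ((\<Gamma>', \<Delta>', B'), (\<Gamma>, \<Delta>, B)) \<in> ms \<longrightarrow>
      invt \<Gamma>' \<Delta>' B' X' Y' \<longrightarrow> \<not> derivable L \<Gamma>' \<Delta>' \<longrightarrow> cm L X' Y')"


lemma gen_left:
  assumes IH: "IHP L (add_mset \<phi> \<Gamma>0) \<Delta> B" and inv: "invt (add_mset \<phi> \<Gamma>0) \<Delta> B X Y"
    and nd: "\<not> derivable L (\<Gamma>1 + \<Gamma>0) (\<Delta>1 + \<Delta>)"
    and h: "hintL \<phi> (X \<union> set_mset \<Gamma>1) (Y \<union> set_mset \<Delta>1)"
    and hs: "\<forall>\<psi>\<in>#\<Gamma>1 + \<Delta>1. \<psi> \<in> sub \<phi>"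
    and sz: "sum_mset (image_mset fsize (\<Gamma>1 + \<Delta>1)) < fsize \<phi>"
    and nb: "\<not> is_boxed \<phi>"
  shows "cm L X Y"
proof -
  let ?X = "X \<union> set_mset \<Gamma>1" and ?Y = "Y \<union> set_mset \<Delta>1"
  have m: "((\<Gamma>1 + \<Gamma>0, \<Delta>1 + \<Delta>, B), (add_mset \<phi> \<Gamma>0, \<Delta>, B)) \<in> ms"
  proof (rule step_ms)
    show "set_mset (\<Gamma>1 + \<Gamma>0 + (\<Delta>1 + \<Delta>)) \<subseteq> subs (set_mset (add_mset \<phi> \<Gamma>0 + \<Delta>))"
    proof
      fix \<psi> assume "\<psi> \<in># \<Gamma>1 + \<Gamma>0 + (\<Delta>1 + \<Delta>)"
      then consider "\<psi> \<in># \<Gamma>1 + \<Delta>1" | "\<psi> \<in># \<Gamma>0 + \<Delta>" by auto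
      then show "\<psi> \<in> subs (set_mset (add_mset \<phi> \<Gamma>0 + \<Delta>))"
      proof cases
        case 1 then show ?thesis using hs by (intro in_subs[of \<phi>]) auto
      next
        case 2 then show ?thesis by (intro in_subs[of \<psi>]) (auto simp: sub_refl)
      qed
    qed
    show "sum_mset (image_mset fsize (\<Gamma>1 + \<Gamma>0 + (\<Delta>1 + \<Delta>)))
        < sum_mset (image_mset fsize (add_mset \<phi> \<Gamma>0 + \<Delta>))" using sz by simp
  qed
  have i: "invt (\<Gamma>1 + \<Gamma>0) (\<Delta>1 + \<Delta>) B ?X ?Y"
    unfolding invt_def
  proof (intro conjI)
    show "set_mset (\<Gamma>1 + \<Gamma>0) \<subseteq> ?X" using inv by (auto simp: invt_def)
    show "set_mset (\<Delta>1 + \<Delta>) \<subseteq> ?Y" using inv by (auto simp: invt_def)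
    show "\<forall>\<psi>\<in>?X. \<psi> \<in># \<Gamma>1 + \<Gamma>0 \<or> hintL \<psi> ?X ?Y"
    proof
    fix \<psi> assume "\<psi> \<in> ?X"
    then consider "\<psi> \<in># \<Gamma>1" | "\<psi> = \<phi>" | "\<psi> \<in># \<Gamma>0" | "hintL \<psi> X Y"
      using inv by (auto simp: invt_def)
    then show "\<psi> \<in># \<Gamma>1 + \<Gamma>0 \<or> hintL \<psi> ?X ?Y"
      by cases (use h hintL_mono[of \<psi> X Y ?X ?Y] in auto)
    qed
    show "\<forall>\<psi>\<in>?Y. \<psi> \<in># \<Delta>1 + \<Delta> \<or> hintR \<psi> ?X ?Y"
    proof
    fix \<psi> assume "\<psi> \<in> ?Y"
    then consider "\<psi> \<in># \<Delta>1" | "\<psi> \<in># \<Delta>" | "hintR \<psi> X Y"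
      using inv by (auto simp: invt_def)
    then show "\<psi> \<in># \<Delta>1 + \<Delta> \<or> hintR \<psi> ?X ?Y"
      by cases (use hintR_mono[of \<psi> X Y ?X ?Y] in auto)
    qed
    show "\<forall>\<psi>\<in>B. is_boxed \<psi> \<and> \<psi> \<in># \<Gamma>1 + \<Gamma>0 \<and> body \<psi> \<in> ?X"
    proof
    fix \<psi> assume "\<psi> \<in> B"
    then show "is_boxed \<psi> \<and> \<psi> \<in># \<Gamma>1 + \<Gamma>0 \<and> body \<psi> \<in> ?X"
      using inv nb by (auto simp: invt_def)
    qed
  qed
  have "cm L ?X ?Y" using IH m i nd unfolding IHP_def by blast
  then show ?thesis by (rule cm_mono) auto
qed

lemma gen_right:
  assumes IH: "IHP L \<Gamma> (add_mset \<phi> \<Delta>0) B" and inv: "invt \<Gamma> (add_mset \<phi> \<Delta>0) B X Y"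
    and nd: "\<not> derivable L (\<Gamma>1 + \<Gamma>) (\<Delta>1 + \<Delta>0)"
    and h: "hintR \<phi> (X \<union> set_mset \<Gamma>1) (Y \<union> set_mset \<Delta>1)"
    and hs: "\<forall>\<psi>\<in>#\<Gamma>1 + \<Delta>1. \<psi> \<in> sub \<phi>"
    and sz: "sum_mset (image_mset fsize (\<Gamma>1 + \<Delta>1)) < fsize \<phi>"
  shows "cm L X Y"
proof -
  let ?X = "X \<union> set_mset \<Gamma>1" and ?Y = "Y \<union> set_mset \<Delta>1"
  have m: "((\<Gamma>1 + \<Gamma>, \<Delta>1 + \<Delta>0, B), (\<Gamma>, add_mset \<phi> \<Delta>0, B)) \<in> ms"
  proof (rule step_ms)
    show "set_mset (\<Gamma>1 + \<Gamma> + (\<Delta>1 + \<Delta>0)) \<subseteq> subs (set_mset (\<Gamma> + add_mset \<phi> \<Delta>0))"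
    proof
      fix \<psi> assume "\<psi> \<in># \<Gamma>1 + \<Gamma> + (\<Delta>1 + \<Delta>0)"
      then consider "\<psi> \<in># \<Gamma>1 + \<Delta>1" | "\<psi> \<in># \<Gamma> + \<Delta>0" by auto
      then show "\<psi> \<in> subs (set_mset (\<Gamma> + add_mset \<phi> \<Delta>0))"
      proof cases
        case 1 then show ?thesis using hs by (intro in_subs[of \<phi>]) auto
      next
        case 2 then show ?thesis by (intro in_subs[of \<psi>]) (auto simp: sub_refl)
      qed
    qed
    show "sum_mset (image_mset fsize (\<Gamma>1 + \<Gamma> + (\<Delta>1 + \<Delta>0)))
        < sum_mset (image_mset fsize (\<Gamma> + add_mset \<phi> \<Delta>0))" using sz by simp
  qed
  have i: "invt (\<Gamma>1 + \<Gamma>) (\<Delta>1 + \<Delta>0) B ?X ?Y"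
    unfolding invt_def
  proof (intro conjI)
    show "set_mset (\<Gamma>1 + \<Gamma>) \<subseteq> ?X" using inv by (auto simp: invt_def)
    show "set_mset (\<Delta>1 + \<Delta>0) \<subseteq> ?Y" using inv by (auto simp: invt_def)
    show "\<forall>\<psi>\<in>?X. \<psi> \<in># \<Gamma>1 + \<Gamma> \<or> hintL \<psi> ?X ?Y"
    proof
    fix \<psi> assume "\<psi> \<in> ?X"
    then consider "\<psi> \<in># \<Gamma>1" | "\<psi> \<in># \<Gamma>" | "hintL \<psi> X Y"
      using inv by (auto simp: invt_def)
    then show "\<psi> \<in># \<Gamma>1 + \<Gamma> \<or> hintL \<psi> ?X ?Y"
      by cases (use hintL_mono[of \<psi> X Y ?X ?Y] in auto)
    qed
    show "\<forall>\<psi>\<in>?Y. \<psi> \<in># \<Delta>1 + \<Delta>0 \<or> hintR \<psi> ?X ?Y"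
    proof
    fix \<psi> assume "\<psi> \<in> ?Y"
    then consider "\<psi> \<in># \<Delta>1" | "\<psi> = \<phi>" | "\<psi> \<in># \<Delta>0" | "hintR \<psi> X Y"
      using inv by (auto simp: invt_def)
    then show "\<psi> \<in># \<Delta>1 + \<Delta>0 \<or> hintR \<psi> ?X ?Y"
      by cases (use h hintR_mono[of \<psi> X Y ?X ?Y] in auto)
    qed
    show "\<forall>\<psi>\<in>B. is_boxed \<psi> \<and> \<psi> \<in># \<Gamma>1 + \<Gamma> \<and> body \<psi> \<in> ?X"
    proof
    fix \<psi> assume "\<psi> \<in> B"
    then show "is_boxed \<psi> \<and> \<psi> \<in># \<Gamma>1 + \<Gamma> \<and> body \<psi> \<in> ?X"
      using inv by (auto simp: invt_def)
    qed
  qed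
  have "cm L ?X ?Y" using IH m i nd unfolding IHP_def by blast
  then show ?thesis by (rule cm_mono) auto
qed

lemma box_eta: "is_boxed \<phi> \<Longrightarrow> Box (grp \<phi>) (body \<phi>) = \<phi>"
  by (cases \<phi>) auto

lemma mdep_body: "is_boxed \<phi> \<Longrightarrow> mdep (body \<phi>) < mdep \<phi>"
  by (cases \<phi>) auto

lemma dt_case:
  assumes IH: "IHP L \<Gamma> \<Delta> B" and inv: "invt \<Gamma> \<Delta> B X Y" and nd: "\<not> derivable L \<Gamma> \<Delta>"
    and kt: "L = KT_D" and mem: "Box G a \<in># \<Gamma>" and nb: "Box G a \<notin> B"
  shows "cm L X Y"
proof -
  obtain \<Gamma>0 where G: "\<Gamma> = add_mset (Box G a) \<Gamma>0" using mem by (metis multi_member_split)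
  have nd': "\<not> derivable L (add_mset a \<Gamma>) \<Delta>"
  proof
    assume "derivable L (add_mset a \<Gamma>) \<Delta>"
    then have "derivable L (add_mset (Box G a) (add_mset a \<Gamma>0)) \<Delta>" using G by (simp add: add_mset_commute)
    then have "derivable L \<Gamma> \<Delta>" using derivable.DT[OF kt] G by blast
    then show False using nd by blast
  qed
  have m: "((add_mset a \<Gamma>, \<Delta>, insert (Box G a) B), (\<Gamma>, \<Delta>, B)) \<in> ms" by (rule dt_ms[OF mem nb])
  let ?X = "insert a X"
  have i: "invt (add_mset a \<Gamma>) \<Delta> (insert (Box G a) B) ?X Y"
  proof -
    have 1: "set_mset (add_mset a \<Gamma>) \<subseteq> ?X" using inv by (auto simp: invt_def)
    have 2: "set_mset \<Delta> \<subseteq> Y" using inv by (auto simp: invt_def)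
    have 3: "\<forall>\<psi>\<in>?X. \<psi> \<in># add_mset a \<Gamma> \<or> hintL \<psi> ?X Y"
      using inv hintL_mono[of _ X Y ?X Y, OF _ subset_insertI order_refl] by (auto simp: invt_def)
    have 4: "\<forall>\<psi>\<in>Y. \<psi> \<in># \<Delta> \<or> hintR \<psi> ?X Y"
      using inv hintR_mono[of _ X Y ?X Y, OF _ subset_insertI order_refl] by (auto simp: invt_def)
    have 5: "\<forall>\<psi>\<in>insert (Box G a) B. is_boxed \<psi> \<and> \<psi> \<in># add_mset a \<Gamma> \<and> body \<psi> \<in> ?X"
      using inv mem by (auto simp: invt_def)
    show ?thesis using 1 2 3 4 5 unfolding invt_def by blast
  qed
  have "cm L ?X Y" using IH m i nd' unfolding IHP_def by blast
  then show ?thesis by (rule cm_mono) auto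
qed

lemma left_case:
  assumes IH: "IHP L \<Gamma> \<Delta> B" and inv: "invt \<Gamma> \<Delta> B X Y" and nd: "\<not> derivable L \<Gamma> \<Delta>"
    and mem: "\<phi> \<in># \<Gamma>" and np: "\<not> (is_atom \<phi> \<or> \<phi> = Bot \<or> is_boxed \<phi>)"
  shows "cm L X Y"
proof -
  obtain \<Gamma>0 where G: "\<Gamma> = add_mset \<phi> \<Gamma>0" using mem by (metis multi_member_split)
  have IH': "IHP L (add_mset \<phi> \<Gamma>0) \<Delta> B" and inv': "invt (add_mset \<phi> \<Gamma>0) \<Delta> B X Y"
    using IH inv G by auto
  have nb: "\<not> is_boxed \<phi>" using np by auto
  show ?thesis
  proof (cases \<phi>)
    case (Conj a b)
    have "\<not> derivable L (add_mset a (add_mset b \<Gamma>0)) \<Delta>" using nd G Conj derivable.conjL by blast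
    then show ?thesis using Conj nb
      by (intro gen_left[OF IH' inv', of "{#a,b#}" "{#}"]) (auto simp: sub_refl)
  next
    case (Disj a b)
    have "\<not> derivable L (add_mset a \<Gamma>0) \<Delta> \<or> \<not> derivable L (add_mset b \<Gamma>0) \<Delta>"
      using nd G Disj derivable.disjL by blast
    then show ?thesis
    proof
      assume "\<not> derivable L (add_mset a \<Gamma>0) \<Delta>"
      then show ?thesis using Disj nb
        by (intro gen_left[OF IH' inv', of "{#a#}" "{#}"]) (auto simp: sub_refl)
    next
      assume "\<not> derivable L (add_mset b \<Gamma>0) \<Delta>"
      then show ?thesis using Disj nb
        by (intro gen_left[OF IH' inv', of "{#b#}" "{#}"]) (auto simp: sub_refl)
    qed
  next
    case (Imp a b)
    have "\<not> derivable L \<Gamma>0 (add_mset a \<Delta>) \<or> \<not> derivable L (add_mset b \<Gamma>0) \<Delta>"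
      using nd G Imp derivable.impL by blast
    then show ?thesis
    proof
      assume "\<not> derivable L \<Gamma>0 (add_mset a \<Delta>)"
      then show ?thesis using Imp nb
        by (intro gen_left[OF IH' inv', of "{#}" "{#a#}"]) (auto simp: sub_refl)
    next
      assume "\<not> derivable L (add_mset b \<Gamma>0) \<Delta>"
      then show ?thesis using Imp nb
        by (intro gen_left[OF IH' inv', of "{#b#}" "{#}"]) (auto simp: sub_refl)
    qed
  next
    case (Neg a)
    have "\<not> derivable L \<Gamma>0 (add_mset a \<Delta>)" using nd G Neg derivable.negL by blast
    then show ?thesis using Neg nb
      by (intro gen_left[OF IH' inv', of "{#}" "{#a#}"]) (auto simp: sub_refl)
  qed (use np in auto)
qed

lemma right_case:
  assumes IH: "IHP L \<Gamma> \<Delta> B" and inv: "invt \<Gamma> \<Delta> B X Y" and nd: "\<not> derivable L \<Gamma> \<Delta>"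
    and mem: "\<phi> \<in># \<Delta>" and np: "\<not> (is_atom \<phi> \<or> \<phi> = Bot \<or> is_boxed \<phi>)"
  shows "cm L X Y"
proof -
  obtain \<Delta>0 where D: "\<Delta> = add_mset \<phi> \<Delta>0" using mem by (metis multi_member_split)
  have IH': "IHP L \<Gamma> (add_mset \<phi> \<Delta>0) B" and inv': "invt \<Gamma> (add_mset \<phi> \<Delta>0) B X Y"
    using IH inv D by auto
  show ?thesis
  proof (cases \<phi>)
    case (Conj a b)
    have "\<not> derivable L \<Gamma> (add_mset a \<Delta>0) \<or> \<not> derivable L \<Gamma> (add_mset b \<Delta>0)"
      using nd D Conj derivable.conjR by blast
    then show ?thesis
    proof
      assume "\<not> derivable L \<Gamma> (add_mset a \<Delta>0)"
      then show ?thesis using Conj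
        by (intro gen_right[OF IH' inv', of "{#}" "{#a#}"]) (auto simp: sub_refl)
    next
      assume "\<not> derivable L \<Gamma> (add_mset b \<Delta>0)"
      then show ?thesis using Conj
        by (intro gen_right[OF IH' inv', of "{#}" "{#b#}"]) (auto simp: sub_refl)
    qed
  next
    case (Disj a b)
    have "\<not> derivable L \<Gamma> (add_mset a (add_mset b \<Delta>0))" using nd D Disj derivable.disjR by blast
    then show ?thesis using Disj
      by (intro gen_right[OF IH' inv', of "{#}" "{#a,b#}"]) (auto simp: sub_refl)
  next
    case (Imp a b)
    have "\<not> derivable L (add_mset a \<Gamma>) (add_mset b \<Delta>0)" using nd D Imp derivable.impR by blast
    then show ?thesis using Imp
      by (intro gen_right[OF IH' inv', of "{#a#}" "{#b#}"]) (auto simp: sub_refl)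
  next
    case (Neg a)
    have "\<not> derivable L (add_mset a \<Gamma>) \<Delta>0" using nd D Neg derivable.negR by blast
    then show ?thesis using Neg
      by (intro gen_right[OF IH' inv', of "{#a#}" "{#}"]) (auto simp: sub_refl)
  qed (use np in auto)
qed

lemma leaf_case:
  fixes \<Gamma> \<Delta> :: "('a::finite, 'p) fm multiset"
  assumes IH: "IHP L \<Gamma> \<Delta> B" and inv: "invt \<Gamma> \<Delta> B X Y" and nd: "\<not> derivable L \<Gamma> \<Delta>"
    and irr: "\<forall>\<phi>\<in>#\<Gamma> + \<Delta>. is_atom \<phi> \<or> \<phi> = Bot \<or> is_boxed \<phi>"
    and kt: "L = KT_D \<Longrightarrow> \<forall>\<phi>\<in>#\<Gamma>. is_boxed \<phi> \<longrightarrow> \<phi> \<in> B"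
  shows "cm L X Y"
proof -
  have noBot: "Bot \<notin># \<Gamma>"
  proof
    assume "Bot \<in># \<Gamma>"
    then obtain \<Gamma>0 where "\<Gamma> = add_mset Bot \<Gamma>0" by (metis multi_member_split)
    then show False using nd derivable.botL[of L \<Gamma>0 \<Delta>] by simp
  qed
  have noAt: "Atom p \<notin># \<Delta>" if pG: "Atom p \<in># \<Gamma>" for p
  proof
    assume "Atom p \<in># \<Delta>"
    then obtain \<Delta>0 where "\<Delta> = add_mset (Atom p) \<Delta>0" by (metis multi_member_split)
    moreover obtain \<Gamma>0 where "\<Gamma> = add_mset (Atom p) \<Gamma>0" using pG by (metis multi_member_split)
    ultimately show False using nd derivable.init[of L p \<Gamma>0 \<Delta>0] by simp
  qed
  define prem where "prem G = image_mset body (filter_mset (\<lambda>\<phi>. is_boxed \<phi> \<and> grp \<phi> \<subseteq> G) \<Gamma>)" for G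
  define premA where "premA a = image_mset body (filter_mset (\<lambda>\<phi>. is_boxed \<phi> \<and> grp \<phi> = {a}) \<Gamma>)" for a
  have dep: "\<forall>\<phi>'\<in>#\<Gamma>' + \<Delta>'. \<exists>\<phi>\<in>#\<Gamma> + \<Delta>. mdep \<phi>' < mdep \<phi>"
    if "\<forall>\<phi>'\<in>#\<Gamma>'. \<exists>\<phi>\<in>#\<Gamma>. is_boxed \<phi> \<and> \<phi>' = body \<phi>" "\<forall>\<phi>'\<in>#\<Delta>'. \<exists>\<phi>\<in>#\<Delta>. is_boxed \<phi> \<and> \<phi>' = body \<phi>"
    for \<Gamma>' \<Delta>'
    using that mdep_body by fastforce
  have triv: "invt \<Gamma>' \<Delta>' {} (set_mset \<Gamma>') (set_mset \<Delta>')" for \<Gamma>' \<Delta>' :: "('a, 'p) fm multiset"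
    by (auto simp: invt_def)
  have dk: "cm L (set_mset (prem G)) {\<beta>}" if bm: "Box G \<beta> \<in># \<Delta>" for G \<beta>
  proof -
    obtain \<Omega> where D: "\<Delta> = add_mset (Box G \<beta>) \<Omega>" using bm by (metis multi_member_split)
    define P where "P = (\<lambda>\<phi>::('a, 'p) fm. is_boxed \<phi> \<and> grp \<phi> \<subseteq> G)"
    define \<Phi> where "\<Phi> = image_mset (\<lambda>\<phi>. (grp \<phi>, body \<phi>)) (filter_mset P \<Gamma>)"
    define \<Sigma> where "\<Sigma> = filter_mset (\<lambda>\<phi>. \<not> P \<phi>) \<Gamma>"
    have "image_mset (\<lambda>(H, \<alpha>). Box H \<alpha>) \<Phi> = image_mset (\<lambda>\<phi>. \<phi>) (filter_mset P \<Gamma>)"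
      unfolding \<Phi>_def multiset.map_comp o_def
      by (rule image_mset_cong) (auto simp: P_def box_eta)
    then have eqG: "\<Sigma> + image_mset (\<lambda>(H, \<alpha>). Box H \<alpha>) \<Phi> = \<Gamma>"
      unfolding \<Sigma>_def by (simp add: add.commute multiset_partition[symmetric])
    have sn: "image_mset snd \<Phi> = prem G"
      unfolding \<Phi>_def prem_def P_def multiset.map_comp o_def by simp
    have nd': "\<not> derivable L (prem G) {#\<beta>#}"
    proof
      assume "derivable L (prem G) {#\<beta>#}"
      then have d: "derivable L (image_mset snd \<Phi>) {#\<beta>#}" using sn by simp
      have c1: "\<forall>x\<in>#\<Phi>. fst x \<subseteq> G" unfolding \<Phi>_def P_def by auto
      have c2: "\<forall>\<phi>\<in>#\<Sigma>. is_atom \<phi> \<or> \<phi> = Bot \<or> (\<exists>H \<gamma>. \<phi> = Box H \<gamma> \<and> \<not> H \<subseteq> G)"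
      proof
        fix \<phi> assume "\<phi> \<in># \<Sigma>"
        then have "\<phi> \<in># \<Gamma>" "\<not> P \<phi>" unfolding \<Sigma>_def by auto
        moreover have "is_atom \<phi> \<or> \<phi> = Bot \<or> is_boxed \<phi>" using irr calculation(1) by auto
        ultimately show "is_atom \<phi> \<or> \<phi> = Bot \<or> (\<exists>H \<gamma>. \<phi> = Box H \<gamma> \<and> \<not> H \<subseteq> G)"
          unfolding P_def by (cases \<phi>) auto
      qed
      have c3: "\<forall>\<phi>\<in>#\<Omega>. is_atom \<phi> \<or> \<phi> = Bot \<or> is_boxed \<phi>" using irr D by auto
      have "derivable L (\<Sigma> + image_mset (\<lambda>(H, \<alpha>). Box H \<alpha>) \<Phi>) (add_mset (Box G \<beta>) \<Omega>)"
        by (rule derivable.DK[OF d c1 c2 c3])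
      then show False using nd eqG D by simp
    qed
    have m: "((prem G, {#\<beta>#}, {}), (\<Gamma>, \<Delta>, B)) \<in> ms"
    proof (rule dk_ms)
      show "\<forall>\<phi>'\<in>#prem G + {#\<beta>#}. \<exists>\<phi>\<in>#\<Gamma> + \<Delta>. mdep \<phi>' < mdep \<phi>"
      proof (rule dep)
        show "\<forall>\<phi>'\<in>#prem G. \<exists>\<phi>\<in>#\<Gamma>. is_boxed \<phi> \<and> \<phi>' = body \<phi>" unfolding prem_def by auto
        show "\<forall>\<phi>'\<in>#{#\<beta>#}. \<exists>\<phi>\<in>#\<Delta>. is_boxed \<phi> \<and> \<phi>' = body \<phi>" using bm by (auto intro!: bexI[of _ "Box G \<beta>"])
      qed
    qed simp
    show ?thesis using IH m triv[of "prem G" "{#\<beta>#}"] nd' unfolding IHP_def by auto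
  qed
  have dd: "cm L (set_mset (premA a)) {}" if kd: "L = KD_D" for a
  proof (cases "premA a = {#}")
    case True
    define M0 :: "((('a, 'p) fm + 'a) list, 'a, 'p) model"
      where "M0 = \<lparr> W = {[]}, R = (\<lambda>G. {([], [])}), V = (\<lambda>p. {}) \<rparr>"
    have "cmodel L M0" using kd
      by (auto simp: M0_def cmodel_def RW_def serial_model_def is_model_def)
    then show ?thesis using True unfolding cm_def by (auto simp: M0_def intro!: exI[of _ M0])
  next
    case False
    define P where "P = (\<lambda>\<phi>::('a, 'p) fm. is_boxed \<phi> \<and> grp \<phi> = {a})"
    define \<Sigma> where "\<Sigma> = filter_mset (\<lambda>\<phi>. \<not> P \<phi>) \<Gamma>"
    have "image_mset (Box {a}) (premA a) = image_mset (\<lambda>\<phi>. \<phi>) (filter_mset P \<Gamma>)"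
      unfolding premA_def P_def multiset.map_comp o_def
      by (rule image_mset_cong) (auto dest!: box_eta)
    then have eqG: "\<Sigma> + image_mset (Box {a}) (premA a) = \<Gamma>"
      unfolding \<Sigma>_def by (simp add: add.commute multiset_partition[symmetric])
    have nd': "\<not> derivable L (premA a) {#}"
    proof
      assume d: "derivable L (premA a) {#}"
      have c2: "\<forall>\<phi>\<in>#\<Sigma>. is_atom \<phi> \<or> \<phi> = Bot \<or> (\<exists>H \<gamma>. \<phi> = Box H \<gamma> \<and> H \<noteq> {a})"
      proof
        fix \<phi> assume "\<phi> \<in># \<Sigma>"
        then have "\<phi> \<in># \<Gamma>" "\<not> P \<phi>" unfolding \<Sigma>_def by auto
        moreover have "is_atom \<phi> \<or> \<phi> = Bot \<or> is_boxed \<phi>" using irr calculation(1) by auto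
        ultimately show "is_atom \<phi> \<or> \<phi> = Bot \<or> (\<exists>H \<gamma>. \<phi> = Box H \<gamma> \<and> H \<noteq> {a})"
          unfolding P_def by (cases \<phi>) auto
      qed
      have c3: "\<forall>\<phi>\<in>#\<Delta>. is_atom \<phi> \<or> \<phi> = Bot \<or> is_boxed \<phi>" using irr by auto
      have "derivable L (\<Sigma> + image_mset (Box {a}) (premA a)) \<Delta>"
        by (rule derivable.DD[OF kd d False c2 c3])
      then show False using nd eqG by simp
    qed
    have m: "((premA a, {#}, {}), (\<Gamma>, \<Delta>, B)) \<in> ms"
    proof (rule dk_ms)
      show "\<forall>\<phi>'\<in>#premA a + {#}. \<exists>\<phi>\<in>#\<Gamma> + \<Delta>. mdep \<phi>' < mdep \<phi>"
      proof (rule dep)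
        show "\<forall>\<phi>'\<in>#premA a. \<exists>\<phi>\<in>#\<Gamma>. is_boxed \<phi> \<and> \<phi>' = body \<phi>" unfolding premA_def by auto
      qed simp
    qed (use False in simp)
    show ?thesis using IH m triv[of "premA a" "{#}"] nd' unfolding IHP_def by auto
  qed
  define T :: "(('a, 'p) fm + 'a) set" where
    "T = Inl ` {\<phi>. \<phi> \<in># \<Delta> \<and> is_boxed \<phi>} \<union> (if L = KD_D then range Inr else {})"
  define CL :: "('a, 'p) fm + 'a \<Rightarrow> ('a, 'p) fm set" where "CL t = (case t of Inl \<phi> \<Rightarrow> set_mset (prem (grp \<phi>)) | Inr a \<Rightarrow> set_mset (premA a))" for t
  define CR :: "('a, 'p) fm + 'a \<Rightarrow> ('a, 'p) fm set" where "CR t = (case t of Inl \<phi> \<Rightarrow> {body \<phi>} | Inr a \<Rightarrow> ({} :: ('a, 'p) fm set))" for t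
  define lab :: "('a, 'p) fm + 'a \<Rightarrow> 'a set \<Rightarrow> bool"
    where "lab t G = (case t of Inl \<phi> \<Rightarrow> G \<subseteq> grp \<phi> | Inr a \<Rightarrow> G = {a})" for t G
  have "\<forall>t\<in>T. \<exists>p :: ((('a, 'p) fm + 'a) list, 'a, 'p) model \<times> (('a, 'p) fm + 'a) list.
          cmodel L (fst p) \<and> snd p \<in> W (fst p) \<and> (\<forall>\<phi>\<in>CL t. sat (fst p) (snd p) \<phi>) \<and>
          (\<forall>\<psi>\<in>CR t. \<not> sat (fst p) (snd p) \<psi>)"
  proof
    fix t assume "t \<in> T"
    then consider (i) \<phi> where "t = Inl \<phi>" "\<phi> \<in># \<Delta>" "is_boxed \<phi>" | (j) a where "t = Inr a" "L = KD_D"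
      unfolding T_def by (auto split: if_splits)
    then show "\<exists>p :: ((('a, 'p) fm + 'a) list, 'a, 'p) model \<times> (('a, 'p) fm + 'a) list.
          cmodel L (fst p) \<and> snd p \<in> W (fst p) \<and> (\<forall>\<phi>\<in>CL t. sat (fst p) (snd p) \<phi>) \<and>
          (\<forall>\<psi>\<in>CR t. \<not> sat (fst p) (snd p) \<psi>)"
    proof cases
      case i
      have "Box (grp \<phi>) (body \<phi>) \<in># \<Delta>" using i by (simp add: box_eta)
      then have "cm L (set_mset (prem (grp \<phi>))) {body \<phi>}" by (rule dk)
      then show ?thesis using i unfolding cm_def CL_def CR_def by auto
    next
      case j
      then have "cm L (set_mset (premA a)) {}" using dd by blast
      then show ?thesis using j unfolding cm_def CL_def CR_def by auto
    qed
  qed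
  then have "\<exists>ch :: ('a, 'p) fm + 'a \<Rightarrow> ((('a, 'p) fm + 'a) list, 'a, 'p) model \<times> (('a, 'p) fm + 'a) list.
          \<forall>t\<in>T. cmodel L (fst (ch t)) \<and> snd (ch t) \<in> W (fst (ch t)) \<and>
          (\<forall>\<phi>\<in>CL t. sat (fst (ch t)) (snd (ch t)) \<phi>) \<and> (\<forall>\<psi>\<in>CR t. \<not> sat (fst (ch t)) (snd (ch t)) \<psi>)"
    by (rule bchoice)
  then obtain ch :: "('a, 'p) fm + 'a \<Rightarrow> ((('a, 'p) fm + 'a) list, 'a, 'p) model \<times> (('a, 'p) fm + 'a) list" where ch: "\<forall>t\<in>T. cmodel L (fst (ch t)) \<and> snd (ch t) \<in> W (fst (ch t)) \<and>
          (\<forall>\<phi>\<in>CL t. sat (fst (ch t)) (snd (ch t)) \<phi>) \<and> (\<forall>\<psi>\<in>CR t. \<not> sat (fst (ch t)) (snd (ch t)) \<psi>)"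
    by blast
  let ?M = "\<lambda>t. fst (ch t)" and ?r = "\<lambda>t. snd (ch t)"
  let ?N = "comb (\<lambda>p. Atom p \<in># \<Gamma>) (L = KT_D) T ?M ?r lab"
  have finT: "finite T" unfolding T_def by auto
  have cN: "cmodel L ?N"
  proof (rule comb_model)
    show "finite T" by (rule finT)
    show "\<forall>t\<in>T. cmodel L (?M t) \<and> ?r t \<in> W (?M t)" using ch by blast
    show "\<forall>t G H. G \<noteq> {} \<longrightarrow> G \<subseteq> H \<longrightarrow> lab t H \<longrightarrow> lab t G"
      unfolding lab_def by (auto split: sum.splits dest: subset_singletonD)
    show "\<forall>a. \<exists>t\<in>T. lab t {a}" if "L = KD_D"
    proof
      fix a
      have "Inr a \<in> T" "lab (Inr a) {a}" using that unfolding T_def lab_def by auto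
      then show "\<exists>t\<in>T. lab t {a}" by blast
    qed
    show "L = KT_D \<Longrightarrow> L = KT_D" .
  qed
  have chRW: "\<forall>t\<in>T. ?r t \<in> W (?M t) \<and> RW (?M t)" using ch by (auto simp: cmodel_def)
  have XG: "\<phi> \<in># \<Gamma> \<or> hintL \<phi> X Y" if "\<phi> \<in> X" for \<phi> using inv that by (auto simp: invt_def)
  have YD: "\<phi> \<in># \<Delta> \<or> hintR \<phi> X Y" if "\<phi> \<in> Y" for \<phi> using inv that by (auto simp: invt_def)
  have XG': "hintL \<phi> X Y" if "\<phi> \<in> X" "\<not> (is_atom \<phi> \<or> \<phi> = Bot \<or> is_boxed \<phi>)" for \<phi>
  proof -
    have "\<phi> \<notin># \<Gamma>" using irr that(2) by auto
    then show ?thesis using XG[OF that(1)] by blast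
  qed
  have YD': "hintR \<phi> X Y" if "\<phi> \<in> Y" "\<not> (is_atom \<phi> \<or> \<phi> = Bot \<or> is_boxed \<phi>)" for \<phi>
  proof -
    have "\<phi> \<notin># \<Delta>" using irr that(2) by auto
    then show ?thesis using YD[OF that(1)] by blast
  qed
  have truth: "(\<phi> \<in> X \<longrightarrow> sat ?N [] \<phi>) \<and> (\<phi> \<in> Y \<longrightarrow> \<not> sat ?N [] \<phi>)" for \<phi>
  proof (induction \<phi>)
    case (Atom p)
    have "sat ?N [] (Atom p) \<longleftrightarrow> Atom p \<in># \<Gamma>" by (rule comb_root_atom)
    then show ?case using XG[of "Atom p"] YD[of "Atom p"] noAt by (auto simp del: sat.simps)
  next
    case Bot
    show ?case using XG[of Bot] noBot by auto
  next
    case (Conj a b)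
    then show ?case using XG'[of "Conj a b"] YD'[of "Conj a b"] by auto
  next
    case (Disj a b)
    then show ?case using XG'[of "Disj a b"] YD'[of "Disj a b"] by auto
  next
    case (Imp a b)
    then show ?case using XG'[of "Imp a b"] YD'[of "Imp a b"] by auto
  next
    case (Neg a)
    then show ?case using XG'[of "Neg a"] YD'[of "Neg a"] by auto
  next
    case (Box G a)
    have L: "sat ?N [] (Box G a)" if "Box G a \<in> X"
    proof -
      have inG: "Box G a \<in># \<Gamma>" using XG[OF that] by auto
      have "sat ?N [] a" if "L = KT_D"
      proof -
        have "Box G a \<in> B" using kt[OF that] inG by auto
        then have "a \<in> X" using inv by (auto simp: invt_def)
        then show ?thesis using Box.IH by blast
      qed
      moreover have "sat (?M t) (?r t) a" if t: "t \<in> T" "lab t G" for t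
      proof -
        have "a \<in> CL t"
        proof (cases t)
          case (Inl \<phi>)
          then have "G \<subseteq> grp \<phi>" using t unfolding lab_def by auto
          then show ?thesis using Inl inG unfolding CL_def prem_def
            by (auto intro!: image_eqI[of _ body "Box G a"])
        next
          case (Inr b)
          then have "G = {b}" using t unfolding lab_def by auto
          then show ?thesis using Inr inG unfolding CL_def premA_def
            by (auto intro!: image_eqI[of _ body "Box G a"])
        qed
        moreover have "\<forall>\<phi>\<in>CL t. sat (?M t) (?r t) \<phi>" using ch t(1) by blast
        ultimately show ?thesis by blast
      qed
      moreover have eq: "sat ?N [] (Box G a) \<longleftrightarrow> ((L = KT_D \<longrightarrow> sat ?N [] a) \<and> (\<forall>t\<in>T. lab t G \<longrightarrow> sat (?M t) (?r t) a))"
        by (rule comb_root_box[OF chRW])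
      ultimately show ?thesis by blast
    qed
    have R: "\<not> sat ?N [] (Box G a)" if "Box G a \<in> Y"
    proof -
      have inD: "Box G a \<in># \<Delta>" using YD[OF that] by auto
      let ?t = "Inl (Box G a) :: ('a, 'p) fm + 'a"
      have t: "?t \<in> T" "lab ?t G" using inD unfolding T_def lab_def by auto
      have "\<forall>\<psi>\<in>CR ?t. \<not> sat (?M ?t) (?r ?t) \<psi>" using ch t(1) by blast
      moreover have "CR ?t = {a}" unfolding CR_def by simp
      ultimately have na: "\<not> sat (?M ?t) (?r ?t) a" by blast
      have eq: "sat ?N [] (Box G a) \<longleftrightarrow> ((L = KT_D \<longrightarrow> sat ?N [] a) \<and> (\<forall>t\<in>T. lab t G \<longrightarrow> sat (?M t) (?r t) a))"
        by (rule comb_root_box[OF chRW])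
      show ?thesis unfolding eq using na t by blast
    qed
    show ?case using L R by blast
  qed
  have "[] \<in> W ?N" by (simp add: comb_W)
  then show ?thesis unfolding cm_def using cN truth by blast
qed

lemma main_all:
  "\<forall>\<Gamma> \<Delta> B X Y. x = (\<Gamma>, \<Delta>, B) \<longrightarrow> invt \<Gamma> \<Delta> B X Y \<longrightarrow> \<not> derivable L \<Gamma> \<Delta> \<longrightarrow>
     cm L X (Y :: ('a::finite, 'p) fm set)"
proof (induction x rule: wf_induct_rule[OF wf_ms])
  case (1 x)
  show ?case
  proof (intro allI impI)
    fix \<Gamma> \<Delta> B X and Y :: "('a, 'p) fm set"
    assume x: "x = (\<Gamma>, \<Delta>, B)" and inv: "invt \<Gamma> \<Delta> B X Y" and nd: "\<not> derivable L \<Gamma> \<Delta>"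
    have IH: "IHP L \<Gamma> \<Delta> B" using 1 x unfolding IHP_def by blast
    define P where "P = (\<lambda>\<phi>::('a, 'p) fm. is_atom \<phi> \<or> \<phi> = Bot \<or> is_boxed \<phi>)"
    show "cm L X Y"
    proof (cases "\<exists>\<phi>\<in>#\<Gamma>. \<not> P \<phi>")
      case True
      then obtain \<phi> where "\<phi> \<in># \<Gamma>" "\<not> P \<phi>" by blast
      then show ?thesis using left_case[OF IH inv nd] unfolding P_def by blast
    next
      case F1: False
      show ?thesis
      proof (cases "\<exists>\<phi>\<in>#\<Delta>. \<not> P \<phi>")
        case True
        then obtain \<phi> where "\<phi> \<in># \<Delta>" "\<not> P \<phi>" by blast
        then show ?thesis using right_case[OF IH inv nd] unfolding P_def by blast
      next
        case F2: False
        show ?thesis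
        proof (cases "\<exists>\<phi>\<in>#\<Gamma>. L = KT_D \<and> is_boxed \<phi> \<and> \<phi> \<notin> B")
          case True
          then obtain \<phi> where \<phi>: "L = KT_D" "\<phi> \<in># \<Gamma>" "is_boxed \<phi>" "\<phi> \<notin> B" by blast
          then have "Box (grp \<phi>) (body \<phi>) \<in># \<Gamma>" "Box (grp \<phi>) (body \<phi>) \<notin> B" by (simp_all add: box_eta)
          then show ?thesis using dt_case[OF IH inv nd \<phi>(1)] by blast
        next
          case F3: False
          have a: "\<forall>\<phi>\<in>#\<Gamma> + \<Delta>. is_atom \<phi> \<or> \<phi> = Bot \<or> is_boxed \<phi>"
          proof
            fix \<phi> assume "\<phi> \<in># \<Gamma> + \<Delta>"
            then have "\<phi> \<in># \<Gamma> \<or> \<phi> \<in># \<Delta>" by simp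
            then show "is_atom \<phi> \<or> \<phi> = Bot \<or> is_boxed \<phi>" using F1 F2 unfolding P_def by blast
          qed
          have b: "L = KT_D \<Longrightarrow> \<forall>\<phi>\<in>#\<Gamma>. is_boxed \<phi> \<longrightarrow> \<phi> \<in> B" using F3 by blast
          show ?thesis by (rule leaf_case[OF IH inv nd a b])
        qed
      qed
    qed
  qed
qed

theorem theorem4p8:
  fixes L :: logic
    and \<Gamma> \<Delta> :: "('a::finite, 'p::countable) fm multiset"
  assumes "\<forall>\<phi>\<in>#\<Gamma> + \<Delta>. wf_fm \<phi>"
    and "valid_fin L \<Gamma> \<Delta>"
  shows "derivable L \<Gamma> \<Delta>"
proof (rule ccontr)
  assume nd: "\<not> derivable L \<Gamma> \<Delta>"
  have "invt \<Gamma> \<Delta> {} (set_mset \<Gamma>) (set_mset \<Delta>)" by (auto simp: invt_def)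
  then have "cm L (set_mset \<Gamma>) (set_mset \<Delta>)" using main_all[of "(\<Gamma>, \<Delta>, {})" L] nd by blast
  then obtain M :: "((('a, 'p) fm + 'a) list, 'a, 'p) model" and w where
    M: "cmodel L M" "w \<in> W M" "\<forall>\<phi>\<in>set_mset \<Gamma>. sat M w \<phi>" "\<forall>\<psi>\<in>set_mset \<Delta>. \<not> sat M w \<psi>"
    unfolding cm_def by blast
  obtain M' :: "(nat, 'a, 'p) model" and w' where
    M': "finite (W M')" "model_class L M'" "w' \<in> W M'" "\<forall>\<phi>. sat M' w' \<phi> = sat M w \<phi>"
    using to_nat_model[OF M(1,2)] by blast
  have "valid_seq_in M' \<Gamma> \<Delta>" using assms(2) M'(1,2) unfolding valid_fin_def by blast
  moreover have "\<forall>\<phi>\<in>#\<Gamma>. sat M' w' \<phi>" using M'(4) M(3) by simp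
  ultimately have "\<exists>\<psi>\<in>#\<Delta>. sat M' w' \<psi>" using M'(3) unfolding valid_seq_in_def by blast
  then show False using M'(4) M(4) by simp
qed

end
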